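(* Let $\mathbf{x}_1,\ldots,\mathbf{x}_n\in\mathbb{S}^{d-1}$ lie strictly on one side of a hyperplane through the origin, i.e., there exists $\mathbf{w}\in\mathbb{R}^d$ with $\langle\mathbf{w},\mathbf{x}_i\rangle>0$ for all $i$. Let $\mathbf{y}\in\arg\min_{\mathbf{v}\in\mathbb{S}^{d-1}}\max_{j\in[n]}\angle(\mathbf{v},\mathbf{x}_j)$ (any minimizer), let $H=\mathbf{y}^\perp$ and let $P_H$ denote orthogonal projection onto $H$. Then $\mathbf{0}\in\mathrm{conv}(P_H(\mathbf{x}_1),\ldots,P_H(\mathbf{x}_n))$.
   Context: $\mathbb{S}^{d-1}$ is the unit sphere in $\mathbb{R}^d$; $\angle(\mathbf{v},\mathbf{x})\in[0,\pi]$ denotes the angle between vectors; $\mathrm{conv}$ is the convex hull. *)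

theory Defs
  imports "HOL-Analysis.Analysis"
begin

definition vangle :: "'a::real_inner \<Rightarrow> 'a \<Rightarrow> real" where
  "vangle v x = arccos ((v \<bullet> x) / (norm v * norm x))"

definition proj_perp :: "'a::real_inner \<Rightarrow> 'a \<Rightarrow> 'a" where
  "proj_perp y x = x - ((x \<bullet> y) / (y \<bullet> y)) *\<^sub>R y"

end

theory Submission
  imports Defs
begin

lemma key_ineq:
  fixes c cj aj a b :: real
  assumes "c \<le> 1" "c \<le> cj" "a < aj" "0 < a" "0 \<le> b"
  shows "c < (cj + (a/(b+1)) * aj) / sqrt (1 + (a/(b+1))^2 * b)"
proof -
  define t where "t = a/(b+1)"
  have t0: "t > 0" using assms by (simp add: t_def)
  have tb: "t * b < a" using assms unfolding t_def by (simp add: field_simps)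
  define s where "s = sqrt (1 + t^2 * b)"
  have s1: "s \<ge> 1" unfolding s_def using assms by simp
  have s2: "s \<le> 1 + t^2*b/2"
  proof -
    have e: "(1 + t^2*b/2)^2 = 1 + t^2*b + (t^2*b/2)^2" by (simp add: power2_eq_square field_simps)
    have "0 \<le> (t^2*b/2)^2" by (rule zero_le_power2)
    hence "1 + t^2*b \<le> (1 + t^2*b/2)^2" using e by linarith
    hence "s \<le> sqrt ((1 + t^2*b/2)^2)" unfolding s_def by (rule real_sqrt_le_mono)
    also have "\<dots> = 1 + t^2*b/2" using assms by simp
    finally show ?thesis .
  qed
  have "c * s < c + t * a"
  proof (cases "c \<le> 0")
    case True
    have "c * s \<le> c" using mult_left_mono_neg[OF s1 True] by simp
    thus ?thesis using t0 assms by (smt (verit) mult_pos_pos)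
  next
    case False
    have "c * s \<le> c * (1 + t^2*b/2)" using False s2 by simp
    also have "\<dots> \<le> c + t^2*b/2"
    proof -
      have "c * (t^2*b/2) \<le> t^2*b/2" using False assms by (simp add: mult_left_le_one_le)
      thus ?thesis by (simp add: algebra_simps)
    qed
    also have "\<dots> < c + t * a"
    proof -
      have "t * (t*b) < t * a" using tb t0 by simp
      moreover have "t^2*b \<ge> 0" using assms by simp
      moreover have "t^2*b = t*(t*b)" by (simp add: power2_eq_square)
      ultimately show ?thesis by linarith
    qed
    finally show ?thesis .
  qed
  also have "\<dots> \<le> cj + t * aj" using assms t0 by (smt (verit) mult_strict_left_mono)
  finally have "c * s < cj + t * aj" .
  hence "c < (cj + t*aj) / s" using s1 by (simp add: field_simps)
  thus ?thesis unfolding s_def t_def .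
qed

theorem lemma3p9:
  fixes x :: "nat \<Rightarrow> 'a::euclidean_space" and n :: nat and y :: 'a
  assumes "n \<ge> 1"
    and "\<forall>i<n. x i \<in> sphere 0 1"
    and "\<exists>w. \<forall>i<n. w \<bullet> x i > 0"
    and "y \<in> sphere 0 1"
    and "\<forall>v\<in>sphere 0 1. (MAX j\<in>{..<n}. vangle y (x j)) \<le> (MAX j\<in>{..<n}. vangle v (x j))"
  shows "0 \<in> convex hull (proj_perp y ` x ` {..<n})"
proof (rule ccontr)
  assume nz: "0 \<notin> convex hull (proj_perp y ` x ` {..<n})"
  have "compact (convex hull (proj_perp y ` x ` {..<n}))"
    by (intro finite_imp_compact_convex_hull) auto
  then obtain p e where p: "p \<noteq> 0" "0 < e" "\<forall>z\<in>convex hull (proj_perp y ` x ` {..<n}). p \<bullet> z > e"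
    using separating_hyperplane_closed_0[OF convex_convex_hull _ nz] compact_imp_closed by blast
  have ny: "norm y = 1" using assms(4) by simp
  have yy: "y \<bullet> y = 1" using ny by (simp add: dot_square_norm)
  have nx: "\<And>j. j < n \<Longrightarrow> norm (x j) = 1" using assms(2) by simp
  define u where "u = p - (p \<bullet> y) *\<^sub>R y"
  have uy: "u \<bullet> y = 0" unfolding u_def using yy by (simp add: algebra_simps)
  have ux: "u \<bullet> x j > e" if "j < n" for j
  proof -
    have "proj_perp y (x j) \<in> convex hull (proj_perp y ` x ` {..<n})"
      using that by (intro hull_inc) auto
    hence "p \<bullet> proj_perp y (x j) > e" using p by blast
    moreover have "p \<bullet> proj_perp y (x j) = u \<bullet> x j"
      unfolding u_def proj_perp_def using yy by (simp add: algebra_simps inner_commute)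
    ultimately show ?thesis by simp
  qed
  define b where "b = u \<bullet> u"
  have b0: "b \<ge> 0" unfolding b_def by simp
  define t where "t = e/(b+1)"
  define z where "z = y + t *\<^sub>R u"
  have zz: "norm z = sqrt (1 + t^2 * b)"
  proof -
    have "z \<bullet> z = 1 + t^2 * b" unfolding z_def b_def using yy uy
      by (simp add: algebra_simps inner_commute power2_eq_square)
    thus ?thesis by (simp add: norm_eq_sqrt_inner)
  qed
  have "1 + t^2*b > 0" using b0 by (simp add: add_pos_nonneg)
  hence zpos: "norm z > 0" unfolding zz by simp
  define v where "v = z /\<^sub>R norm z"
  have vs: "v \<in> sphere 0 1" unfolding v_def using zpos by simp
  have n0: "0 \<in> {..<n}" using assms(1) by simp
  have fin: "finite {..<n}" "{..<n} \<noteq> {}" using n0 by auto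
  have "(MAX j\<in>{..<n}. vangle y (x j)) \<in> (\<lambda>j. vangle y (x j)) ` {..<n}"
    by (rule Max_in) (use fin in auto)
  then obtain k where k: "k < n" "vangle y (x k) = (MAX j\<in>{..<n}. vangle y (x j))"
    by auto
  define c where "c = y \<bullet> x k"
  have vy: "vangle y (x j) = arccos (y \<bullet> x j)" if "j < n" for j
    unfolding vangle_def using ny nx[OF that] by simp
  have cb: "\<bar>y \<bullet> x j\<bar> \<le> 1" if "j < n" for j
    using Cauchy_Schwarz_ineq2[of y "x j"] ny nx[OF that] by simp
  have ge: "y \<bullet> x j \<ge> c" if "j < n" for j
  proof (rule ccontr)
    assume "\<not> ?thesis"
    hence "arccos c < arccos (y \<bullet> x j)"
      using cb[OF that] cb[OF k(1)] unfolding c_def by (intro arccos_less_arccos) auto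
    moreover have "vangle y (x j) \<le> vangle y (x k)" using k fin that by simp
    ultimately show False using vy that k(1) c_def by simp
  qed
  have lt: "vangle v (x j) < vangle y (x k)" if "j < n" for j
  proof -
    have vv: "norm v = 1" using vs by simp
    have w: "v \<bullet> x j = (y \<bullet> x j + t * (u \<bullet> x j)) / sqrt (1 + t^2 * b)"
      unfolding v_def z_def zz[symmetric] by (simp add: inner_add_left divide_inverse)
    have "c < v \<bullet> x j" unfolding w t_def
      by (rule key_ineq) (use cb[OF k(1)] ge[OF that] ux[OF that] p(2) b0 c_def in auto)
    moreover have "\<bar>v \<bullet> x j\<bar> \<le> 1"
      using Cauchy_Schwarz_ineq2[of v "x j"] vv nx[OF that] by simp
    ultimately have "arccos (v \<bullet> x j) < arccos c"
      using cb[OF k(1)] unfolding c_def by (intro arccos_less_arccos) auto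
    thus ?thesis using vy[OF k(1)] vv nx[OF that] unfolding vangle_def c_def by simp
  qed
  have "(MAX j\<in>{..<n}. vangle v (x j)) < vangle y (x k)"
    using fin lt by simp
  moreover have "(MAX j\<in>{..<n}. vangle y (x j)) \<le> (MAX j\<in>{..<n}. vangle v (x j))"
    using assms(5) vs by blast
  ultimately show False using k(2) by linarith
qed

end
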